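(* Let $([N],\mathcal{E})$ be a fixed (non-random) directed graph whose underlying undirected graph is a tree, and condition the model on the skeleton being this graph (i.e. $I_{vw}=1$ iff $(vw)\in\mathcal{E}$, with the types fixed). Let $\lambda\in(0,1]$ and define the solvency cascade by: for $n\ge0$, $\mathcal{D}^{(n)}_v:=g_\lambda(\Delta^{(n)}_v/\bar X_v)$ (with $\mathcal{D}^{(n)}_v:=0$ if $\bar X_v=0$), $S^{(n)}_{wv}:=I_{wv}\bar\Omega_{wv}\mathcal{D}^{(n)}_w$, $S^{(n)}_v:=\sum_{w\ne v}S^{(n)}_{wv}$, $\Delta^{(n+1)}_v:=\Delta^{(0)}_v-S^{(n)}_v$. Then for every $n\ge0$, every $v\in[N]$ and every edge $(wv)\in\mathcal{E}$: (1) $\Delta^{(n)}_v$ is $\sigma(\mathcal{M}^-_v\cup\{v\})$-measurable; (2) $S^{(n)}_{wv}$ is $\sigma(\mathcal{M}^-_w\cup\mathcal{M}^+_{w\setminus v}\cup\{w\}\cup\{(wv)\})$-measurable; (3) $S^{(n)}_v$ is $\sigma(\mathcal{M}^-_v)$-measurable.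
   Context: Balance-sheet data: initial solvency buffers $\Delta^{(0)}_u\in\mathbb{R}$ for nodes $u$ and exposures $\bar\Omega_{wv}\ge0$ for edges $(wv)$; an edge $(wv)\in\mathcal{E}$ (i.e. $I_{wv}=1$) means bank $w$ has borrowed from bank $v$, so shocks pass from $w$ to $v$. $\bar X_w:=\sum_{u}I_{wu}\bar\Omega_{wu}$ and $g_\lambda(x):=\min(1,\max(-x/\lambda,0))$. For a set $A$ of nodes and edges, $\sigma(A)$ is the sigma-algebra generated by $\{\Delta^{(0)}_u: u\in A \text{ a node}\}\cup\{\bar\Omega_{wv}:(wv)\in A\text{ an edge}\}$. For a node $u$ and an edge $e$ incident to $u$, let $C(e,u)$ be the set consisting of $e$ together with all nodes and edges of the connected component, not containing $u$, of the tree with $e$ removed. Define $\mathcal{M}^-_u:=\bigcup\{C(e,u): e=(wu)\in\mathcal{E}\text{ directed into }u\}$, $\mathcal{M}^+_u:=\bigcup\{C(e,u): e=(uw)\in\mathcal{E}\text{ directed out of }u\}$, and for an edge $(wv)\in\mathcal{E}$, $\mathcal{M}^-_{v\setminus w}:=\bigcup\{C(e,v): e\text{ directed into }v,\ e\neq(wv)\}$ and $\mathcal{M}^+_{w\setminus v}:=\bigcup\{C(e,w): e\text{ directed out of }w,\ e\ne(wv)\}$. *)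

theory Defs
  imports "HOL-Probability.Probability"
begin

text \<open>Nodes are \<open>{1..N}\<close>; a directed edge \<open>(w,v) \<in> E\<close> means \<open>I_wv = 1\<close>
  (bank w borrowed from bank v; shocks pass from w to v).\<close>

definition und_adj :: "(nat \<times> nat) set \<Rightarrow> nat \<Rightarrow> nat \<Rightarrow> bool" where
  "und_adj E a b \<longleftrightarrow> (a, b) \<in> E \<or> (b, a) \<in> E"

text \<open>The underlying undirected graph of \<open>({1..N}, E)\<close> is a tree: the digraph
  is loop-free, has no pair of antiparallel edges (otherwise the underlying
  undirected multigraph has a double edge), and the underlying undirected
  graph is connected and has no cycle.\<close>
definition underlying_tree :: "nat \<Rightarrow> (nat \<times> nat) set \<Rightarrow> bool" where
  "underlying_tree N E \<longleftrightarrow>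
     E \<subseteq> {1..N} \<times> {1..N}
   \<and> (\<forall>v. (v, v) \<notin> E)
   \<and> (\<forall>a b. (a, b) \<in> E \<longrightarrow> (b, a) \<notin> E)
   \<and> (\<forall>a\<in>{1..N}. \<forall>b\<in>{1..N}. (a, b) \<in> {(x, y). und_adj E x y}\<^sup>*)
   \<and> \<not> (\<exists>xs. length xs \<ge> 3 \<and> distinct xs \<and>
          (\<forall>i < length xs. und_adj E (xs ! i) (xs ! ((i + 1) mod length xs))))"

type_synonym ne_set = "nat set \<times> (nat \<times> nat) set"

definition ne_union :: "ne_set set \<Rightarrow> ne_set" where
  "ne_union S = (\<Union>A\<in>S. fst A, \<Union>A\<in>S. snd A)"

definition comp_nodes :: "(nat \<times> nat) set \<Rightarrow> nat \<times> nat \<Rightarrow> nat \<Rightarrow> nat set" where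
  "comp_nodes E e x = {y. (x, y) \<in> {(a, b). und_adj (E - {e}) a b}\<^sup>*}"

text \<open>\<open>C(e,u)\<close>: the edge \<open>e\<close> (incident to \<open>u\<close>) together with all nodes and edges
  of the connected component of the tree minus \<open>e\<close> not containing \<open>u\<close>
  (i.e. the component of the other endpoint of \<open>e\<close>).\<close>
definition Cset :: "(nat \<times> nat) set \<Rightarrow> nat \<times> nat \<Rightarrow> nat \<Rightarrow> ne_set" where
  "Cset E e u =
    (let x = (if fst e = u then snd e else fst e);
         K = comp_nodes E e x
     in (K, {e} \<union> {(p, q) \<in> E - {e}. p \<in> K \<and> q \<in> K}))"

definition Mminus :: "(nat \<times> nat) set \<Rightarrow> nat \<Rightarrow> ne_set" where
  "Mminus E u = ne_union {Cset E e u | e. e \<in> E \<and> snd e = u}"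

definition Mplus :: "(nat \<times> nat) set \<Rightarrow> nat \<Rightarrow> ne_set" where
  "Mplus E u = ne_union {Cset E e u | e. e \<in> E \<and> fst e = u}"

definition Mminus_excl :: "(nat \<times> nat) set \<Rightarrow> nat \<Rightarrow> nat \<Rightarrow> ne_set" where
  "Mminus_excl E v w = ne_union {Cset E e v | e. e \<in> E \<and> snd e = v \<and> e \<noteq> (w, v)}"

definition Mplus_excl :: "(nat \<times> nat) set \<Rightarrow> nat \<Rightarrow> nat \<Rightarrow> ne_set" where
  "Mplus_excl E w v = ne_union {Cset E e w | e. e \<in> E \<and> fst e = w \<and> e \<noteq> (w, v)}"

definition sigmaA ::
  "'a measure \<Rightarrow> (nat \<Rightarrow> 'a \<Rightarrow> real) \<Rightarrow> (nat \<Rightarrow> nat \<Rightarrow> 'a \<Rightarrow> real) \<Rightarrow> ne_set \<Rightarrow> 'a measure" where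
  "sigmaA M D0 Om A = sigma (space M)
     ({D0 u -` B \<inter> space M | u B. u \<in> fst A \<and> B \<in> sets borel}
      \<union> {Om w v -` B \<inter> space M | w v B. (w, v) \<in> snd A \<and> B \<in> sets borel})"

definition g_lam :: "real \<Rightarrow> real \<Rightarrow> real" where
  "g_lam lam x = min 1 (max (- x / lam) 0)"

definition Ind :: "(nat \<times> nat) set \<Rightarrow> nat \<Rightarrow> nat \<Rightarrow> real" where
  "Ind E w v = (if (w, v) \<in> E then 1 else 0)"

definition Xbar :: "nat \<Rightarrow> (nat \<times> nat) set \<Rightarrow> (nat \<Rightarrow> nat \<Rightarrow> 'a \<Rightarrow> real) \<Rightarrow> nat \<Rightarrow> 'a \<Rightarrow> real" where
  "Xbar N E Om w \<omega> = (\<Sum>u\<in>{1..N}. Ind E w u * Om w u \<omega>)"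

definition dfrac :: "real \<Rightarrow> real \<Rightarrow> real \<Rightarrow> real" where
  "dfrac lam X d = (if X = 0 then 0 else g_lam lam (d / X))"

primrec Delta ::
  "nat \<Rightarrow> (nat \<times> nat) set \<Rightarrow> real \<Rightarrow> (nat \<Rightarrow> 'a \<Rightarrow> real) \<Rightarrow> (nat \<Rightarrow> nat \<Rightarrow> 'a \<Rightarrow> real)
   \<Rightarrow> nat \<Rightarrow> nat \<Rightarrow> 'a \<Rightarrow> real" where
  "Delta N E lam D0 Om 0 v \<omega> = D0 v \<omega>"
| "Delta N E lam D0 Om (Suc n) v \<omega> = D0 v \<omega> -
     (\<Sum>w\<in>{1..N} - {v}. Ind E w v * Om w v \<omega> *
        dfrac lam (Xbar N E Om w \<omega>) (Delta N E lam D0 Om n w \<omega>))"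

definition Dcal ::
  "nat \<Rightarrow> (nat \<times> nat) set \<Rightarrow> real \<Rightarrow> (nat \<Rightarrow> 'a \<Rightarrow> real) \<Rightarrow> (nat \<Rightarrow> nat \<Rightarrow> 'a \<Rightarrow> real)
   \<Rightarrow> nat \<Rightarrow> nat \<Rightarrow> 'a \<Rightarrow> real" where
  "Dcal N E lam D0 Om n v \<omega> = dfrac lam (Xbar N E Om v \<omega>) (Delta N E lam D0 Om n v \<omega>)"

definition Sedge ::
  "nat \<Rightarrow> (nat \<times> nat) set \<Rightarrow> real \<Rightarrow> (nat \<Rightarrow> 'a \<Rightarrow> real) \<Rightarrow> (nat \<Rightarrow> nat \<Rightarrow> 'a \<Rightarrow> real)
   \<Rightarrow> nat \<Rightarrow> nat \<Rightarrow> nat \<Rightarrow> 'a \<Rightarrow> real" where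
  "Sedge N E lam D0 Om n w v \<omega> = Ind E w v * Om w v \<omega> * Dcal N E lam D0 Om n w \<omega>"

definition Stot ::
  "nat \<Rightarrow> (nat \<times> nat) set \<Rightarrow> real \<Rightarrow> (nat \<Rightarrow> 'a \<Rightarrow> real) \<Rightarrow> (nat \<Rightarrow> nat \<Rightarrow> 'a \<Rightarrow> real)
   \<Rightarrow> nat \<Rightarrow> nat \<Rightarrow> 'a \<Rightarrow> real" where
  "Stot N E lam D0 Om n v \<omega> = (\<Sum>w\<in>{1..N} - {v}. Sedge N E lam D0 Om n w v \<omega>)"

lemma Delta_Suc_Stot:
  "Delta N E lam D0 Om (Suc n) v \<omega> = D0 v \<omega> - Stot N E lam D0 Om n v \<omega>"
  by (simp add: Stot_def Sedge_def Dcal_def)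

end

theory Submission imports Defs "HOL-Library.Transitive_Closure_Table" begin

lemma comp_rtp: "y \<in> comp_nodes E e x \<longleftrightarrow> (\<lambda>a b. und_adj (E - {e}) a b)\<^sup>*\<^sup>* x y"
  unfolding comp_nodes_def by (simp add: rtranclp_rtrancl_eq)

lemma L2:
  assumes T: "underlying_tree N E" and eE: "e \<in> E" and ey: "e = (y,z) \<or> e = (z,y)"
  shows "z \<notin> comp_nodes E e y"
proof
  assume "z \<in> comp_nodes E e y"
  then obtain xs where p: "rtrancl_path (\<lambda>a b. und_adj (E - {e}) a b) y xs z"
    by (auto simp: comp_rtp rtranclp_eq_rtrancl_path)
  then obtain xs' where p': "rtrancl_path (\<lambda>a b. und_adj (E - {e}) a b) y xs' z"
     and d: "distinct (y # xs')" by (rule rtrancl_path_distinct)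
  have loop: "\<forall>v. (v,v) \<notin> E" and asym: "\<forall>a b. (a, b) \<in> E \<longrightarrow> (b, a) \<notin> E"
   and nocyc: "\<not> (\<exists>xs. length xs \<ge> 3 \<and> distinct xs \<and>
          (\<forall>i < length xs. und_adj E (xs ! i) (xs ! ((i + 1) mod length xs))))"
    using T unfolding underlying_tree_def by blast+
  have yz: "y \<noteq> z" using ey eE loop by auto
  have ne: "xs' \<noteq> []" using p' yz by (auto elim: rtrancl_path.cases)
  have lz: "last xs' = z" using p' ne by (rule rtrancl_path_last)
  show False
  proof (cases "length xs' = 1")
    case True
    then obtain a where "xs' = [a]" by (cases xs') auto
    with lz have "xs' = [z]" by simp
    with p' have "und_adj (E - {e}) y z" by (auto elim: rtrancl_path.cases)
    thus False using ey eE asym unfolding und_adj_def by auto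
  next
    case F: False
    let ?L = "y # xs'"
    have len: "length ?L \<ge> 3" proof -
      have h: "0 < length xs'" using ne by simp
      have "length xs' \<ge> 2" using h F by linarith
      thus ?thesis by simp
    qed
    have "\<forall>i < length ?L. und_adj E (?L ! i) (?L ! ((i + 1) mod length ?L))"
    proof (intro allI impI)
      fix i assume i: "i < length ?L"
      show "und_adj E (?L ! i) (?L ! ((i + 1) mod length ?L))"
      proof (cases "i < length xs'")
        case True
        have "und_adj (E - {e}) (?L ! i) (xs' ! i)" using rtrancl_path_nth[OF p' True] .
        moreover have "(i+1) mod length ?L = i + 1" using True by simp
        ultimately show ?thesis unfolding und_adj_def by auto
      next
        case False
        hence ii: "i = length xs'" using i by simp
        have "?L ! i = last xs'" using ne ii by (simp add: last_conv_nth)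
        moreover have "(i+1) mod length ?L = 0" using ii by simp
        ultimately show ?thesis using lz ey eE unfolding und_adj_def by auto
      qed
    qed
    thus False using nocyc len d by blast
  qed
qed

lemma L1:
  assumes T: "underlying_tree N E" and fE: "f \<in> E" and eE: "e \<in> E" and fe: "f \<noteq> e"
    and fx: "f = (x,y) \<or> f = (y,x)" and ez: "e = (y,z) \<or> e = (z,y)"
  shows "comp_nodes E f x \<subseteq> comp_nodes E e y"
proof
  fix t assume "t \<in> comp_nodes E f x"
  hence "(\<lambda>a b. und_adj (E - {f}) a b)\<^sup>*\<^sup>* x t" by (simp add: comp_rtp)
  thus "t \<in> comp_nodes E e y"
  proof (induction rule: rtranclp_induct)
    case base
    have "und_adj (E - {e}) y x" using fx fE fe unfolding und_adj_def by auto
    thus ?case by (simp add: comp_rtp)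
  next
    case (step a b)
    show ?case
    proof (cases "und_adj (E - {e}) a b")
      case True
      with step.IH show ?thesis by (simp add: comp_rtp)
    next
      case False
      with step.hyps(2) have "(a,b) = e \<or> (b,a) = e" unfolding und_adj_def by auto
      with ez have "(a = y \<and> b = z) \<or> (a = z \<and> b = y)" by auto
      thus ?thesis
      proof
        assume "a = y \<and> b = z"
        hence "y \<in> comp_nodes E f x" using step.hyps(1) by (simp add: comp_rtp)
        moreover have "y \<notin> comp_nodes E f x" using L2[OF T fE] fx by auto
        ultimately show ?thesis by blast
      next
        assume "a = z \<and> b = y" thus ?thesis by (simp add: comp_rtp)
      qed
    qed
  qed
qed

definition ne_le :: "ne_set \<Rightarrow> ne_set \<Rightarrow> bool" where
  "ne_le A B \<longleftrightarrow> fst A \<subseteq> fst B \<and> snd A \<subseteq> snd B"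

lemma ne_le_trans: "ne_le A B \<Longrightarrow> ne_le B C \<Longrightarrow> ne_le A C"
  unfolding ne_le_def by blast

lemma ne_le_union: "ne_le (ne_union S) B \<longleftrightarrow> (\<forall>A\<in>S. ne_le A B)"
  unfolding ne_le_def ne_union_def by auto

lemma ne_le_union_mem: "A \<in> S \<Longrightarrow> ne_le A (ne_union S)"
  unfolding ne_le_def ne_union_def by auto

lemma Cset_eq: "fst e \<noteq> u \<Longrightarrow> Cset E e u = (comp_nodes E e (fst e),
     {e} \<union> {(p, q) \<in> E - {e}. p \<in> comp_nodes E e (fst e) \<and> q \<in> comp_nodes E e (fst e)})"
  unfolding Cset_def Let_def by simp

lemma Cset_eq2: "fst e = u \<Longrightarrow> Cset E e u = (comp_nodes E e (snd e),
     {e} \<union> {(p, q) \<in> E - {e}. p \<in> comp_nodes E e (snd e) \<and> q \<in> comp_nodes E e (snd e)})"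
  unfolding Cset_def Let_def by simp

lemma comp_self: "x \<in> comp_nodes E e x"
  unfolding comp_nodes_def by simp

lemma Ssub:
  assumes T: "underlying_tree N E" and fE: "f \<in> E" and wv: "(w,v) \<in> E" and fe: "f \<noteq> (w,v)"
    and fx: "f = (x,w) \<or> f = (w,x)"
  shows "ne_le (comp_nodes E f x, {f} \<union> {(p, q) \<in> E - {f}. p \<in> comp_nodes E f x \<and> q \<in> comp_nodes E f x})
           (Cset E (w,v) v)"
proof -
  have loop: "\<forall>v. (v,v) \<notin> E" using T unfolding underlying_tree_def by blast
  have wne: "w \<noteq> v" using wv loop by auto
  let ?K = "comp_nodes E (w,v) w"
  have C: "Cset E (w,v) v = (?K, {(w,v)} \<union> {(p, q) \<in> E - {(w,v)}. p \<in> ?K \<and> q \<in> ?K})"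
    using Cset_eq[of "(w,v)" v E] wne by simp
  have sub: "comp_nodes E f x \<subseteq> ?K"
    using L1[OF T fE wv fe, of x w v] fx by auto
  have vK: "v \<notin> ?K" using L2[OF T wv, of w v] by simp
  have wK: "w \<in> ?K" by (rule comp_self)
  have xK: "x \<in> ?K" using sub comp_self by blast
  show ?thesis unfolding C ne_le_def using sub vK wK xK fE fe fx by auto
qed

lemma Gmain:
  assumes T: "underlying_tree N E" and wv: "(w,v) \<in> E"
  shows "ne_le (ne_union {Mminus E w, Mplus_excl E w v, ({w}, {}), ({}, {(w, v)})}) (Mminus E v)"
proof -
  have loop: "\<forall>v. (v,v) \<notin> E" using T unfolding underlying_tree_def by blast
  have wne: "w \<noteq> v" using wv loop by auto
  have CM: "ne_le (Cset E (w,v) v) (Mminus E v)"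
    unfolding Mminus_def using wv by (intro ne_le_union_mem) auto
  let ?K = "comp_nodes E (w,v) w"
  have C: "Cset E (w,v) v = (?K, {(w,v)} \<union> {(p, q) \<in> E - {(w,v)}. p \<in> ?K \<and> q \<in> ?K})"
    using Cset_eq[of "(w,v)" v E] wne by simp
  have A1: "ne_le (Mminus E w) (Cset E (w,v) v)"
    unfolding Mminus_def ne_le_union
  proof
    fix A assume "A \<in> {Cset E e w |e. e \<in> E \<and> snd e = w}"
    then obtain f where fE: "f \<in> E" and sf: "snd f = w" and A: "A = Cset E f w" by blast
    obtain x where fx: "f = (x,w)" using sf by (cases f) auto
    have xw: "x \<noteq> w" using fE fx loop by auto
    have fe: "f \<noteq> (w,v)" using fx xw by auto
    show "ne_le A (Cset E (w,v) v)"
      using Ssub[OF T fE wv fe, of x] fx Cset_eq[of f w E] xw sf A by simp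
  qed
  have A2: "ne_le (Mplus_excl E w v) (Cset E (w,v) v)"
    unfolding Mplus_excl_def ne_le_union
  proof
    fix A assume "A \<in> {Cset E e w |e. e \<in> E \<and> fst e = w \<and> e \<noteq> (w,v)}"
    then obtain f where fE: "f \<in> E" and sf: "fst f = w" and fe: "f \<noteq> (w,v)" and A: "A = Cset E f w" by blast
    obtain x where fx: "f = (w,x)" using sf by (cases f) auto
    show "ne_le A (Cset E (w,v) v)"
      using Ssub[OF T fE wv fe, of x] fx Cset_eq2[of f w E] sf A by simp
  qed
  have A3: "ne_le ({w}, {}) (Cset E (w,v) v)" unfolding C ne_le_def using comp_self by auto
  have A4: "ne_le ({}, {(w,v)}) (Cset E (w,v) v)" unfolding C ne_le_def by auto
  have "ne_le (ne_union {Mminus E w, Mplus_excl E w v, ({w}, {}), ({}, {(w, v)})}) (Cset E (w,v) v)"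
    unfolding ne_le_union using A1 A2 A3 A4 by auto
  thus ?thesis using CM ne_le_trans by blast
qed


lemma sigmaA_gen_sub: "({D0 u -` B \<inter> space M | u B. u \<in> fst A \<and> B \<in> sets borel}
      \<union> {Om w v -` B \<inter> space M | w v B. (w, v) \<in> snd A \<and> B \<in> sets borel}) \<subseteq> Pow (space M)"
  by auto

lemma space_sigmaA: "space (sigmaA M D0 Om A) = space M"
  unfolding sigmaA_def by (rule space_measure_of) (rule sigmaA_gen_sub)

lemma sets_sigmaA: "sets (sigmaA M D0 Om A) = sigma_sets (space M)
     ({D0 u -` B \<inter> space M | u B. u \<in> fst A \<and> B \<in> sets borel}
      \<union> {Om w v -` B \<inter> space M | w v B. (w, v) \<in> snd A \<and> B \<in> sets borel})"
  unfolding sigmaA_def by (rule sets_measure_of) (rule sigmaA_gen_sub)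

lemma sigmaA_mono:
  assumes "ne_le A B" "f \<in> borel_measurable (sigmaA M D0 Om A)"
  shows "f \<in> borel_measurable (sigmaA M D0 Om B)"
proof -
  have "measurable (sigmaA M D0 Om A) borel \<subseteq> measurable (sigmaA M D0 Om B) borel"
    unfolding sigmaA_def
    by (rule measurable_mono1[OF sigmaA_gen_sub]) (use assms(1) in \<open>auto simp: ne_le_def\<close>)
  thus ?thesis using assms(2) by blast
qed

lemma D0_meas: "u \<in> fst A \<Longrightarrow> D0 u \<in> borel_measurable (sigmaA M D0 Om A)"
  by (rule measurableI) (auto simp: space_sigmaA sets_sigmaA intro!: sigma_sets.Basic)

lemma Om_meas: "(w,v) \<in> snd A \<Longrightarrow> Om w v \<in> borel_measurable (sigmaA M D0 Om A)"
  by (rule measurableI) (auto simp: space_sigmaA sets_sigmaA intro!: sigma_sets.Basic)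

lemma dfrac_meas:
  assumes "X \<in> borel_measurable M'" "d \<in> borel_measurable M'"
  shows "(\<lambda>\<omega>. dfrac lam (X \<omega>) (d \<omega>)) \<in> borel_measurable M'"
  unfolding dfrac_def g_lam_def using assms by measurable

lemma Xbar_meas:
  assumes "\<And>u. (w,u) \<in> E \<Longrightarrow> (w,u) \<in> snd A"
  shows "Xbar N E Om w \<in> borel_measurable (sigmaA M D0 Om A)"
proof -
  have "(\<lambda>\<omega>. \<Sum>u\<in>{1..N}. Ind E w u * Om w u \<omega>) \<in> borel_measurable (sigmaA M D0 Om A)"
  proof (rule borel_measurable_sum)
    fix u
    show "(\<lambda>\<omega>. Ind E w u * Om w u \<omega>) \<in> borel_measurable (sigmaA M D0 Om A)"
    proof (cases "(w,u) \<in> E")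
      case True
      thus ?thesis using Om_meas[OF assms[OF True]] by (simp add: Ind_def)
    next
      case False
      thus ?thesis by (simp add: Ind_def)
    qed
  qed
  thus ?thesis unfolding Xbar_def[abs_def] by simp
qed


lemma snd_ne_union: "snd (ne_union S) = (\<Union>A\<in>S. snd A)" by (simp add: ne_union_def)

lemma Sedge_step:
  assumes wv: "(w,v) \<in> E"
    and D: "Delta N E lam D0 Om n w \<in> borel_measurable (sigmaA M D0 Om (ne_union {Mminus E w, ({w}, {})}))"
  shows "Sedge N E lam D0 Om n w v \<in> borel_measurable (sigmaA M D0 Om
                  (ne_union {Mminus E w, Mplus_excl E w v, ({w}, {}), ({}, {(w, v)})}))"
proof -
  let ?A = "ne_union {Mminus E w, Mplus_excl E w v, ({w}, {}), ({}, {(w, v)})}"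
  have le: "ne_le (ne_union {Mminus E w, ({w}, {})}) ?A"
    unfolding ne_le_union by (auto intro: ne_le_union_mem)
  have D': "Delta N E lam D0 Om n w \<in> borel_measurable (sigmaA M D0 Om ?A)"
    by (rule sigmaA_mono[OF le D])
  have X: "Xbar N E Om w \<in> borel_measurable (sigmaA M D0 Om ?A)"
  proof (rule Xbar_meas)
    fix u assume wu: "(w,u) \<in> E"
    show "(w,u) \<in> snd ?A"
    proof (cases "u = v")
      case True thus ?thesis by (simp add: ne_union_def)
    next
      case False
      have "(w,u) \<in> snd (Cset E (w,u) w)" by (simp add: Cset_def Let_def)
      moreover have "Cset E (w,u) w \<in> {Cset E e w |e. e \<in> E \<and> fst e = w \<and> e \<noteq> (w,v)}"
        using wu False by auto
      ultimately have "(w,u) \<in> snd (Mplus_excl E w v)"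
        unfolding Mplus_excl_def snd_ne_union by blast
      thus ?thesis by (simp add: ne_union_def)
    qed
  qed
  have O: "Om w v \<in> borel_measurable (sigmaA M D0 Om ?A)"
    by (rule Om_meas) (simp add: ne_union_def)
  have "(\<lambda>\<omega>. Om w v \<omega> * dfrac lam (Xbar N E Om w \<omega>) (Delta N E lam D0 Om n w \<omega>))
          \<in> borel_measurable (sigmaA M D0 Om ?A)"
    using O dfrac_meas[OF X D'] by measurable
  thus ?thesis using wv unfolding Sedge_def[abs_def] Dcal_def Ind_def by simp
qed

lemma Stot_step:
  assumes T: "underlying_tree N E"
    and D: "\<And>w. w \<in> {1..N} \<Longrightarrow> Delta N E lam D0 Om n w \<in> borel_measurable (sigmaA M D0 Om (ne_union {Mminus E w, ({w}, {})}))"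
  shows "Stot N E lam D0 Om n v \<in> borel_measurable (sigmaA M D0 Om (Mminus E v))"
proof -
  have sub: "E \<subseteq> {1..N} \<times> {1..N}" using T unfolding underlying_tree_def by blast
  have "(\<lambda>\<omega>. \<Sum>w\<in>{1..N} - {v}. Sedge N E lam D0 Om n w v \<omega>) \<in> borel_measurable (sigmaA M D0 Om (Mminus E v))"
  proof (rule borel_measurable_sum)
    fix w
    show "Sedge N E lam D0 Om n w v \<in> borel_measurable (sigmaA M D0 Om (Mminus E v))"
    proof (cases "(w,v) \<in> E")
      case True
      hence "w \<in> {1..N}" using sub by auto
      thus ?thesis using sigmaA_mono[OF Gmain[OF T True] Sedge_step[OF True D]] by blast
    next
      case False
      thus ?thesis by (simp add: Sedge_def[abs_def] Ind_def)
    qed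
  qed
  thus ?thesis unfolding Stot_def[abs_def] by simp
qed

theorem proposition5:
  fixes M :: "'a measure" and N :: nat and E :: "(nat \<times> nat) set" and lam :: real
    and D0 :: "nat \<Rightarrow> 'a \<Rightarrow> real" and Om :: "nat \<Rightarrow> nat \<Rightarrow> 'a \<Rightarrow> real"
  assumes "prob_space M"
    and "underlying_tree N E"
    and "0 < lam" and "lam \<le> 1"
    and "\<And>u. u \<in> {1..N} \<Longrightarrow> D0 u \<in> borel_measurable M"
    and "\<And>w v. (w, v) \<in> E \<Longrightarrow> Om w v \<in> borel_measurable M"
    and "\<And>w v \<omega>. (w, v) \<in> E \<Longrightarrow> \<omega> \<in> space M \<Longrightarrow> Om w v \<omega> \<ge> 0"
  shows "\<forall>n v. v \<in> {1..N} \<longrightarrow>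
           Delta N E lam D0 Om n v \<in>
             borel_measurable (sigmaA M D0 Om (ne_union {Mminus E v, ({v}, {})}))
         \<and> Stot N E lam D0 Om n v \<in> borel_measurable (sigmaA M D0 Om (Mminus E v))
         \<and> (\<forall>w. (w, v) \<in> E \<longrightarrow>
              Sedge N E lam D0 Om n w v \<in>
                borel_measurable (sigmaA M D0 Om
                  (ne_union {Mminus E w, Mplus_excl E w v, ({w}, {}), ({}, {(w, v)})})))"
proof -
  note T = assms(2)
  have sub: "E \<subseteq> {1..N} \<times> {1..N}" using T unfolding underlying_tree_def by blast
  have DL: "\<forall>v\<in>{1..N}. Delta N E lam D0 Om n v \<in>
             borel_measurable (sigmaA M D0 Om (ne_union {Mminus E v, ({v}, {})}))" for n
  proof (induction n)
    case 0
    show ?case by (auto intro!: D0_meas simp: ne_union_def)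
  next
    case (Suc n)
    show ?case
    proof
      fix v assume v: "v \<in> {1..N}"
      have S: "Stot N E lam D0 Om n v \<in> borel_measurable (sigmaA M D0 Om (ne_union {Mminus E v, ({v}, {})}))"
        by (rule sigmaA_mono[OF _ Stot_step[OF T]]) (use Suc.IH in \<open>auto intro: ne_le_union_mem\<close>)
      have D: "D0 v \<in> borel_measurable (sigmaA M D0 Om (ne_union {Mminus E v, ({v}, {})}))"
        by (rule D0_meas) (simp add: ne_union_def)
      have "(\<lambda>\<omega>. D0 v \<omega> - Stot N E lam D0 Om n v \<omega>) \<in> borel_measurable (sigmaA M D0 Om (ne_union {Mminus E v, ({v}, {})}))"
        using S D by measurable
      thus "Delta N E lam D0 Om (Suc n) v \<in> borel_measurable (sigmaA M D0 Om (ne_union {Mminus E v, ({v}, {})}))"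
        by (simp add: Delta_Suc_Stot[abs_def])
    qed
  qed
  show ?thesis
  proof (intro allI impI conjI)
    fix n v assume v: "v \<in> {1..N}"
    show "Delta N E lam D0 Om n v \<in> borel_measurable (sigmaA M D0 Om (ne_union {Mminus E v, ({v}, {})}))"
      using DL v by blast
    show "Stot N E lam D0 Om n v \<in> borel_measurable (sigmaA M D0 Om (Mminus E v))"
      by (rule Stot_step[OF T]) (use DL in blast)
    fix w assume wv: "(w,v) \<in> E"
    show "Sedge N E lam D0 Om n w v \<in> borel_measurable (sigmaA M D0 Om
                  (ne_union {Mminus E w, Mplus_excl E w v, ({w}, {}), ({}, {(w, v)})}))"
    proof -
      have "w \<in> {1..N}" using sub wv by auto
      thus "Sedge N E lam D0 Om n w v \<in> borel_measurable (sigmaA M D0 Om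
                  (ne_union {Mminus E w, Mplus_excl E w v, ({w}, {}), ({}, {(w, v)})}))"
        using Sedge_step[OF wv] DL by blast
    qed
  qed
qed

end
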